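(* $12,13,14,15,16\notin\operatorname{Spec}(32_{65})$.
   Context: $32_{65}$ is the finite integral symmetric relation algebra with atoms $1'$, $a$, $b$, $c$, all symmetric, in which a diversity cycle $xyz$ (with $x,y,z\in\{a,b,c\}$) is mandatory (i.e. $x;y\ge z$) if it involves $a$ and forbidden (i.e. $x;y\cdot z=0$) otherwise. A representation over a set $U$ is an embedding into the full relation algebra on $U\times U$. $\operatorname{Spec}(A)$ is the set of cardinals $\alpha\le\omega$ such that $A$ has a representation over a set of cardinality $\alpha$. *)

theory Defs
  imports Main
begin

text \<open>The finite relation algebra 32_65, presented as the complex algebra of its
atom structure: elements are sets of atoms, join is union, complement is set
complement, converse is the identity (all atoms are symmetric), the identity
element is the atom set {Id'}, and composition is the complex (lifted) product of
the atom composition table.\<close>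

datatype atom = Id' | At_a | At_b | At_c

definition diversity :: "atom \<Rightarrow> bool" where
  "diversity x \<longleftrightarrow> x \<noteq> Id'"

text \<open>Identity is neutral; for diversity atoms,
the identity is below x;y iff x = y (converse of x is x); a diversity cycle xyz is
allowed (mandatory) iff it involves the atom a, forbidden otherwise.\<close>
definition atom_le_comp :: "atom \<Rightarrow> atom \<Rightarrow> atom \<Rightarrow> bool" where
  "atom_le_comp x y z \<longleftrightarrow>
     (if x = Id' then z = y
      else if y = Id' then z = x
      else if z = Id' then x = y
      else (x = At_a \<or> y = At_a \<or> z = At_a))"

type_synonym ra_elem = "atom set"

definition ra_comp :: "ra_elem \<Rightarrow> ra_elem \<Rightarrow> ra_elem" where
  "ra_comp X Y = {z. \<exists>x\<in>X. \<exists>y\<in>Y. atom_le_comp x y z}"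

definition ra_conv :: "ra_elem \<Rightarrow> ra_elem" where
  "ra_conv X = X"

definition ra_one :: ra_elem where
  "ra_one = {Id'}"

definition representation :: "'u set \<Rightarrow> (ra_elem \<Rightarrow> ('u \<times> 'u) set) \<Rightarrow> bool" where
  "representation U h \<longleftrightarrow>
     inj h \<and>
     (\<forall>X. h X \<subseteq> U \<times> U) \<and>
     (\<forall>X Y. h (X \<union> Y) = h X \<union> h Y) \<and>
     (\<forall>X. h (- X) = (U \<times> U) - h X) \<and>
     h ra_one = Id_on U \<and>
     (\<forall>X. h (ra_conv X) = converse (h X)) \<and>
     (\<forall>X Y. h (ra_comp X Y) = h X O h Y)"

definition fin_spec :: "nat set" where
  "fin_spec = {n. \<exists>(U::nat set) h. finite U \<and> card U = n \<and> representation U h}"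

end

theory Submission
  imports Defs
begin

lemma small_impossible:
  assumes r: "representation U h" and fin: "finite U" and ne: "U \<noteq> {}"
  shows "20 \<le> card U"
proof -
  have sub: "\<And>X. h X \<subseteq> U \<times> U" and un: "\<And>X Y. h (X \<union> Y) = h X \<union> h Y"
   and cm: "\<And>X. h (-X) = U\<times>U - h X" and one: "h {Id'} = Id_on U"
   and cv: "\<And>X. h X = converse (h X)" and co: "\<And>X Y. h (ra_comp X Y) = h X O h Y"
    using r unfolding representation_def ra_one_def ra_conv_def by auto
  have mono: "\<And>X Y. X \<subseteq> Y \<Longrightarrow> h X \<subseteq> h Y"
    by (metis un sup.absorb_iff2 sup_ge1)
  have int: "\<And>X Y. h (X \<inter> Y) = h X \<inter> h Y"
  proof -
    fix X Y :: "atom set"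
    have "X \<inter> Y = - (-X \<union> -Y)" by auto
    then have "h (X\<inter>Y) = U\<times>U - ((U\<times>U - h X) \<union> (U\<times>U - h Y))" by (metis cm un)
    then show "h (X \<inter> Y) = h X \<inter> h Y" using sub[of X] sub[of Y] by auto
  qed
  have emp: "h {} = {}"
  proof -
    have "h {} = h ({Id'} \<inter> -{Id'})" by simp
    also have "\<dots> = h {Id'} \<inter> (U\<times>U - h {Id'})" by (simp only: int cm)
    also have "\<dots> = {}" by blast
    finally show ?thesis .
  qed
  have disj: "\<And>x y. x \<noteq> y \<Longrightarrow> h {x} \<inter> h {y} = {}"
    by (metis int emp Int_insert_left_if0 Int_empty_left singletonD)
  have univ: "(UNIV::atom set) = {Id'} \<union> {At_a} \<union> {At_b} \<union> {At_c}"
    by (auto intro: atom.exhaust)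
  have hU: "h UNIV = U \<times> U" using cm[of "{}"] emp by simp
  have cover: "U \<times> U = h {Id'} \<union> h {At_a} \<union> h {At_b} \<union> h {At_c}"
    using hU univ un by metis
  have compI: "\<And>z X Y. z \<in> ra_comp X Y \<Longrightarrow> h {z} \<subseteq> h X O h Y"
    using mono co by (metis empty_subsetI insert_subset)
  define A where "A = h {At_a}"
  define B where "B = h {At_b}"
  define C where "C = h {At_c}"
  define E where "E = B \<union> C"
  have symh: "\<And>X a b. (a,b) \<in> h X \<Longrightarrow> (b,a) \<in> h X"
  proof -
    fix X a b assume ab: "(a,b) \<in> h X"
    have "(b,a) \<in> converse (h X)" using ab by simp
    with cv[of X] show "(b,a) \<in> h X" by (rule ssubst)
  qed
  have symE: "\<And>x y. (x,y) \<in> E \<Longrightarrow> (y,x) \<in> E"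
    unfolding E_def B_def C_def using symh by blast
  have AB: "A \<inter> B = {}" "A \<inter> C = {}" "B \<inter> C = {}"
    unfolding A_def B_def C_def using disj by auto
  have AE: "A \<inter> E = {}" using AB unfolding E_def by auto
  have AId: "\<And>x. (x,x) \<notin> A" unfolding A_def proof
    fix x assume "(x,x) \<in> h {At_a}"
    moreover then have "(x,x) \<in> Id_on U" using sub[of "{At_a}"] by auto
    ultimately show False using disj[of Id' At_a] one by auto
  qed
  have subE: "\<And>x y. (x,y) \<in> E \<Longrightarrow> x \<in> U \<and> y \<in> U"
    unfolding E_def B_def C_def using sub by blast
  have toA: "\<And>x y. x \<in> U \<Longrightarrow> y \<in> U \<Longrightarrow> x \<noteq> y \<Longrightarrow> (x,y) \<notin> E \<Longrightarrow> (x,y) \<in> A"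
  proof -
    fix x y assume xy: "x \<in> U" "y \<in> U" "x \<noteq> y" "(x,y) \<notin> E"
    have "(x,y) \<in> h {Id'} \<union> h {At_a} \<union> h {At_b} \<union> h {At_c}" using xy(1,2) cover by blast
    moreover have "(x,y) \<notin> h {Id'}" using one xy(3) by auto
    ultimately show "(x,y) \<in> A" using xy(4) unfolding A_def E_def B_def C_def by blast
  qed
  have hbc: "h {At_b, At_c} = E" unfolding E_def B_def C_def
    by (metis un insert_is_Un)
  have rcbc: "ra_comp {At_b, At_c} {At_b, At_c} = {Id', At_a}"
    unfolding ra_comp_def atom_le_comp_def
    by (auto intro: atom.exhaust)
  have tri: "\<And>x y z. (x,y) \<in> E \<Longrightarrow> (y,z) \<in> E \<Longrightarrow> (x,z) \<notin> E"
  proof -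
    fix x y z assume "(x,y) \<in> E" "(y,z) \<in> E"
    then have "(x,z) \<in> h {Id', At_a}" using co[of "{At_b, At_c}" "{At_b, At_c}"] hbc rcbc by auto
    moreover have "h {Id', At_a} \<inter> h {At_b, At_c} = {}"
      using int[of "{Id', At_a}" "{At_b, At_c}"] emp by simp
    ultimately show "(x,z) \<notin> E" using hbc by auto
  qed
  have c1: "At_a \<in> ra_comp {At_b} {At_b}" "At_a \<in> ra_comp {At_c} {At_c}"
    "At_a \<in> ra_comp {At_b} {At_c}" "At_a \<in> ra_comp {At_c} {At_b}"
    "At_a \<in> ra_comp {At_a} {At_b}" "At_b \<in> ra_comp {At_a} {At_b}"
    "Id' \<in> ra_comp {At_b} {At_b}"
    unfolding ra_comp_def atom_le_comp_def by auto
  note w = compI[OF c1(1)] compI[OF c1(2)] compI[OF c1(3)] compI[OF c1(4)]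
    compI[OF c1(5)] compI[OF c1(6)] compI[OF c1(7)]
  have T4: "\<And>s t. (s,t) \<in> A \<Longrightarrow> 4 \<le> card {v. (s,v)\<in>E \<and> (v,t)\<in>E}"
  proof -
    fix s t assume st: "(s,t) \<in> A"
    obtain w1 where w1: "(s,w1) \<in> B" "(w1,t) \<in> B" using w(1) st unfolding A_def B_def by blast
    obtain w2 where w2: "(s,w2) \<in> C" "(w2,t) \<in> C" using w(2) st unfolding A_def C_def by blast
    obtain w3 where w3: "(s,w3) \<in> B" "(w3,t) \<in> C" using w(3) st unfolding A_def B_def C_def by blast
    obtain w4 where w4: "(s,w4) \<in> C" "(w4,t) \<in> B" using w(4) st unfolding A_def B_def C_def by blast
    have d: "w1 \<noteq> w2" "w1 \<noteq> w3" "w1 \<noteq> w4" "w2 \<noteq> w3" "w2 \<noteq> w4" "w3 \<noteq> w4"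
      using w1 w2 w3 w4 AB(3) by blast+
    have "{w1,w2,w3,w4} \<subseteq> {v. (s,v)\<in>E \<and> (v,t)\<in>E}"
      using w1 w2 w3 w4 unfolding E_def by auto
    moreover have "finite {v. (s,v)\<in>E \<and> (v,t)\<in>E}"
      by (rule finite_subset[OF _ fin]) (use subE in blast)
    moreover have "card {w1,w2,w3,w4} = 4" using d by simp
    ultimately show "4 \<le> card {v. (s,v)\<in>E \<and> (v,t)\<in>E}" by (metis card_mono)
  qed
  obtain u where u: "u \<in> U" using ne by blast
  have "(u,u) \<in> h {Id'}" using u one by auto
  then obtain x where ux: "(u,x) \<in> B" using w(7) unfolding B_def by blast
  then obtain p where up: "(u,p) \<in> A" and px: "(p,x) \<in> B" using w(6) unfolding A_def B_def by blast
  obtain q where uq: "(u,q) \<in> A" and qp: "(q,p) \<in> B" using w(5) up unfolding A_def B_def by blast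
  obtain y where uy: "(u,y) \<in> B" and yq: "(y,q) \<in> B" using w(1) uq unfolding A_def B_def by blast
  have e: "(u,x) \<in> E" "(x,p) \<in> E" "(p,q) \<in> E" "(q,y) \<in> E" "(y,u) \<in> E"
    using ux px qp yq uy symE unfolding E_def by blast+
  have xq: "(x,q) \<in> A"
  proof (rule toA)
    show "x \<in> U" "q \<in> U" using e subE by blast+
    show "x \<noteq> q" using ux uq AB by blast
    show "(x,q) \<notin> E" using e tri by blast
  qed
  have py: "(p,y) \<in> A"
  proof (rule toA)
    show "p \<in> U" "y \<in> U" using e subE by blast+
    show "p \<noteq> y" using up uy AB by blast
    show "(p,y) \<notin> E" using e tri by blast
  qed
  have qu: "(q,u) \<in> A" using uq symh unfolding A_def by blast
  have yx: "(y,x) \<in> A"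
  proof (rule toA)
    show "y \<in> U" "x \<in> U" using e subE by blast+
    show "y \<noteq> x" using e tri symE by blast
    show "(y,x) \<notin> E" using e tri symE by blast
  qed
  define T where "T = (\<lambda>s t. {v. (s,v)\<in>E \<and> (v,t)\<in>E})"
  have finT: "\<And>s t. finite (T s t)"
    unfolding T_def by (rule finite_subset[OF _ fin]) (use subE in blast)
  have subT: "\<And>s t. T s t \<subseteq> U" unfolding T_def using subE by blast
  have card4: "4 \<le> card (T u p)" "4 \<le> card (T x q)" "4 \<le> card (T p y)"
    "4 \<le> card (T q u)" "4 \<le> card (T y x)"
    unfolding T_def using T4 up xq py qu yx by auto
  have dj: "T u p \<inter> T x q = {}" "T u p \<inter> T p y = {}" "T u p \<inter> T q u = {}"
    "T u p \<inter> T y x = {}" "T x q \<inter> T p y = {}" "T x q \<inter> T q u = {}"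
    "T x q \<inter> T y x = {}" "T p y \<inter> T q u = {}" "T p y \<inter> T y x = {}"
    "T q u \<inter> T y x = {}"
    unfolding T_def using e tri symE by blast+
  let ?S = "T u p \<union> T x q \<union> T p y \<union> T q u \<union> T y x"
  have "card ?S = card (T u p) + card (T x q) + card (T p y) + card (T q u) + card (T y x)"
    using finT dj by (simp add: card_Un_disjoint Int_Un_distrib2)
  moreover have "card ?S \<le> card U" using subT fin by (simp add: card_mono)
  ultimately show ?thesis using card4 by linarith
qed

theorem mainTheorem7:
  shows "12 \<notin> fin_spec \<and> 13 \<notin> fin_spec \<and> 14 \<notin> fin_spec \<and> 15 \<notin> fin_spec \<and> 16 \<notin> fin_spec"
proof -
  have "\<And>n. n \<in> fin_spec \<Longrightarrow> 0 < n \<Longrightarrow> 20 \<le> n"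
  proof -
    fix n assume "n \<in> fin_spec" "0 < n"
    then obtain U :: "nat set" and h where "finite U" "card U = n" "representation U h"
      unfolding fin_spec_def by blast
    moreover then have "U \<noteq> {}" using \<open>0 < n\<close> by auto
    ultimately show "20 \<le> n" using small_impossible by blast
  qed
  then show ?thesis by fastforce
qed

end
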